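(* Let $K$ be a field, $\kappa$ an infinite cardinal, and $\mathcal R=(R_\alpha\mid\alpha<\kappa)$ a sequence of $K$-algebras each of which possesses a multiplicative basis. Then $R=R(\kappa,K,\mathcal R)$ has a multiplicative basis. If moreover $R_0$ has a strong multiplicative basis containing a non-zero idempotent, then $R$ has a strong multiplicative basis.
   Context: $R(\kappa,K,\mathcal R)$ denotes the $K$-subalgebra $I\oplus1_P\cdot K$ of $P=\prod_{\alpha<\kappa}R_\alpha$, where $I=\bigoplus_{\alpha<\kappa}R_\alpha$. A $K$-linear basis $B$ of a $K$-algebra is multiplicative if for all $b,b'\in B$ either $bb'=0$ or $bb'\in B$, and strong multiplicative if $bb'\in B$ for all $b,b'\in B$. *)

theory Defs
  imports Complex_Main "HOL-Library.Function_Algebras"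
begin

definition kalgebra :: "('k::field \<Rightarrow> 'a::ab_group_add \<Rightarrow> 'a) \<Rightarrow> 'a set
     \<Rightarrow> ('a \<Rightarrow> 'a \<Rightarrow> 'a) \<Rightarrow> 'a \<Rightarrow> bool" where
  "kalgebra scale W m u \<longleftrightarrow>
     module.subspace scale W \<and> u \<in> W \<and>
     (\<forall>x\<in>W. \<forall>y\<in>W. m x y \<in> W) \<and>
     (\<forall>x\<in>W. \<forall>y\<in>W. \<forall>z\<in>W. m (m x y) z = m x (m y z)) \<and>
     (\<forall>x\<in>W. \<forall>y\<in>W. \<forall>z\<in>W. m (x + y) z = m x z + m y z \<and> m x (y + z) = m x y + m x z) \<and>
     (\<forall>c. \<forall>x\<in>W. \<forall>y\<in>W. m (scale c x) y = scale c (m x y) \<and> m x (scale c y) = scale c (m x y)) \<and>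
     (\<forall>x\<in>W. m u x = x \<and> m x u = x)"

definition lin_basis :: "('k::field \<Rightarrow> 'a::ab_group_add \<Rightarrow> 'a) \<Rightarrow> 'a set \<Rightarrow> 'a set \<Rightarrow> bool" where
  "lin_basis scale W B \<longleftrightarrow> B \<subseteq> W \<and> \<not> module.dependent scale B \<and> module.span scale B = W"

definition mult_basis :: "('k::field \<Rightarrow> 'a::ab_group_add \<Rightarrow> 'a) \<Rightarrow> 'a set
     \<Rightarrow> ('a \<Rightarrow> 'a \<Rightarrow> 'a) \<Rightarrow> 'a set \<Rightarrow> bool" where
  "mult_basis scale W m B \<longleftrightarrow> lin_basis scale W B \<and>
     (\<forall>b\<in>B. \<forall>b'\<in>B. m b b' = 0 \<or> m b b' \<in> B)"

definition strong_mult_basis :: "('k::field \<Rightarrow> 'a::ab_group_add \<Rightarrow> 'a) \<Rightarrow> 'a set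
     \<Rightarrow> ('a \<Rightarrow> 'a \<Rightarrow> 'a) \<Rightarrow> 'a set \<Rightarrow> bool" where
  "strong_mult_basis scale W m B \<longleftrightarrow> lin_basis scale W B \<and>
     (\<forall>b\<in>B. \<forall>b'\<in>B. m b b' \<in> B)"

definition fscale :: "('k \<Rightarrow> 'a \<Rightarrow> 'a) \<Rightarrow> 'k \<Rightarrow> ('i \<Rightarrow> 'a) \<Rightarrow> ('i \<Rightarrow> 'a)" where
  "fscale scale c f = (\<lambda>i. scale c (f i))"

definition Pmul :: "('i \<Rightarrow> 'a \<Rightarrow> 'a \<Rightarrow> 'a) \<Rightarrow> ('i \<Rightarrow> 'a) \<Rightarrow> ('i \<Rightarrow> 'a) \<Rightarrow> ('i \<Rightarrow> 'a)" where
  "Pmul m f g = (\<lambda>i. m i (f i) (g i))"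

definition Iset :: "('i \<Rightarrow> 'a set) \<Rightarrow> ('i \<Rightarrow> 'a::zero) set" where
  "Iset W = {f. (\<forall>i. f i \<in> W i) \<and> finite {i. f i \<noteq> 0}}"

text \<open>R(kappa,K,R) = I + K 1_P, where 1_P = one (the family of units).\<close>
definition Rset :: "('k \<Rightarrow> 'a \<Rightarrow> 'a) \<Rightarrow> ('i \<Rightarrow> 'a set) \<Rightarrow> ('i \<Rightarrow> 'a)
     \<Rightarrow> ('i \<Rightarrow> 'a::ab_group_add) set" where
  "Rset scale W one = {g + fscale scale c one | g c. g \<in> Iset W}"

end

theory Submission
  imports Defs
begin

definition dlt :: "'i \<Rightarrow> 'a::zero \<Rightarrow> 'i \<Rightarrow> 'a" where
  "dlt i a = (\<lambda>j. if j = i then a else 0)"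

definition xv :: "'i \<Rightarrow> 'a::ab_group_add \<Rightarrow> 'i \<Rightarrow> 'a \<Rightarrow> 'i \<Rightarrow> 'a" where
  "xv i0 e i b = (if i = i0 then dlt i b else dlt i b + dlt i0 e)"

definition BS :: "('i \<Rightarrow> 'a set) \<Rightarrow> 'i \<Rightarrow> 'a::ab_group_add \<Rightarrow> ('i \<Rightarrow> 'a) \<Rightarrow> ('i \<Rightarrow> 'a) set" where
  "BS Bs i0 e one = {xv i0 e i b | i b. b \<in> Bs i} \<union> (if finite {i. one i \<noteq> 0} then {} else {one})"

lemma fun_sum_apply: "(sum f A) j = (\<Sum>x\<in>A. f x j)"
  by (induction A rule: infinite_finite_induct) auto

lemma xv_self: "xv i0 e j b j = b"
  by (auto simp: xv_def dlt_def)

lemma xv_other: "k \<noteq> i \<Longrightarrow> k \<noteq> i0 \<Longrightarrow> xv i0 e i b k = 0"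
  by (auto simp: xv_def dlt_def)

lemma xv_supp: "{k. xv i0 e i b k \<noteq> 0} \<subseteq> {i, i0}"
  by (auto simp: xv_def dlt_def split: if_splits)

context
  fixes scale :: "'k::field \<Rightarrow> 'a::ab_group_add \<Rightarrow> 'a"
    and W :: "'i \<Rightarrow> 'a set"
    and mul :: "'i \<Rightarrow> 'a \<Rightarrow> 'a \<Rightarrow> 'a"
    and one :: "'i \<Rightarrow> 'a"
  assumes VS: "vector_space scale"
    and ALG: "\<forall>i. kalgebra scale (W i) (mul i) (one i)"
begin

interpretation V: vector_space scale by (rule VS)

lemma vsF: "vector_space (fscale scale)"
  unfolding vector_space_def fscale_def
  by (auto simp: fun_eq_iff V.scale_right_distrib V.scale_left_distrib)

interpretation F: vector_space "fscale scale" by (rule vsF)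

lemma Wsub: "V.subspace (W i)"
  using ALG unfolding kalgebra_def by blast

lemma one_in: "one i \<in> W i"
  using ALG unfolding kalgebra_def by blast

lemma mul_closed: "x \<in> W i \<Longrightarrow> y \<in> W i \<Longrightarrow> mul i x y \<in> W i"
  using ALG unfolding kalgebra_def by blast

lemma mul_one_l: "x \<in> W i \<Longrightarrow> mul i (one i) x = x"
  using ALG unfolding kalgebra_def by blast

lemma mul_one_r: "x \<in> W i \<Longrightarrow> mul i x (one i) = x"
  using ALG unfolding kalgebra_def by blast

lemma mul_0l: "x \<in> W i \<Longrightarrow> mul i 0 x = 0"
proof -
  assume x: "x \<in> W i"
  have z: "0 \<in> W i" using Wsub V.subspace_0 by blast
  have "mul i (0+0) x = mul i 0 x + mul i 0 x"
    using ALG x z unfolding kalgebra_def by blast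
  then show ?thesis by simp
qed

lemma mul_0r: "x \<in> W i \<Longrightarrow> mul i x 0 = 0"
proof -
  assume x: "x \<in> W i"
  have z: "0 \<in> W i" using Wsub V.subspace_0 by blast
  have "mul i x (0+0) = mul i x 0 + mul i x 0"
    using ALG x z unfolding kalgebra_def by blast
  then show ?thesis by simp
qed

lemma Iset_add: "g \<in> Iset W \<Longrightarrow> h \<in> Iset W \<Longrightarrow> g + h \<in> Iset W"
proof -
  assume g: "g \<in> Iset W" and h: "h \<in> Iset W"
  have "{i. (g + h) i \<noteq> 0} \<subseteq> {i. g i \<noteq> 0} \<union> {i. h i \<noteq> 0}" by auto
  moreover have "finite ({i. g i \<noteq> 0} \<union> {i. h i \<noteq> 0})" using g h by (simp add: Iset_def)
  ultimately show ?thesis using g h Wsub V.subspace_add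
    unfolding Iset_def by (auto intro: finite_subset)
qed

lemma Iset_scale: "g \<in> Iset W \<Longrightarrow> fscale scale c g \<in> Iset W"
proof -
  assume g: "g \<in> Iset W"
  have "{i. fscale scale c g i \<noteq> 0} \<subseteq> {i. g i \<noteq> 0}" by (auto simp: fscale_def)
  then show ?thesis using g Wsub V.subspace_scale
    unfolding Iset_def by (auto intro: finite_subset simp: fscale_def)
qed

lemma Iset_0: "0 \<in> Iset W"
  using Wsub V.subspace_0 unfolding Iset_def by auto

lemma Rset_sub: "F.subspace (Rset scale W one)"
  unfolding F.subspace_def
proof (intro conjI ballI allI)
  show "0 \<in> Rset scale W one"
    unfolding Rset_def using Iset_0 by (auto intro!: exI[of _ 0] exI[of _ "0::'k"])
next
  fix x y assume x: "x \<in> Rset scale W one" and y: "y \<in> Rset scale W one"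
  then obtain g c h d where "x = g + fscale scale c one" "y = h + fscale scale d one"
    "g \<in> Iset W" "h \<in> Iset W" unfolding Rset_def by blast
  moreover have "x + y = (g + h) + fscale scale (c + d) one"
    using calculation by (simp add: F.scale_left_distrib algebra_simps)
  ultimately show "x + y \<in> Rset scale W one" unfolding Rset_def using Iset_add by blast
next
  fix c x assume x: "x \<in> Rset scale W one"
  then obtain g d where "x = g + fscale scale d one" "g \<in> Iset W" unfolding Rset_def by blast
  moreover have "fscale scale c x = fscale scale c g + fscale scale (c * d) one"
    using calculation by (simp add: F.scale_right_distrib)
  ultimately show "fscale scale c x \<in> Rset scale W one" unfolding Rset_def using Iset_scale by blast
qed


lemma dlt_span:
  assumes LB: "\<forall>i. lin_basis scale (W i) (Bs i)" and a: "a \<in> W i"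
  shows "dlt i a \<in> F.span (dlt i ` Bs i)"
proof -
  have "a \<in> V.span (Bs i)" using LB a unfolding lin_basis_def by blast
  then obtain t r where t: "finite t" "t \<subseteq> Bs i" and ae: "a = (\<Sum>b\<in>t. scale (r b) b)"
    unfolding V.span_explicit by blast
  have "dlt i a = (\<Sum>b\<in>t. fscale scale (r b) (dlt i b))"
    by (rule ext) (auto simp: fun_sum_apply dlt_def fscale_def ae)
  also have "\<dots> \<in> F.span (dlt i ` Bs i)"
    using t by (intro F.span_sum F.span_scale F.span_base) auto
  finally show ?thesis .
qed

lemma Iset_span:
  assumes LB: "\<forall>i. lin_basis scale (W i) (Bs i)" and g: "g \<in> Iset W"
  shows "g \<in> F.span (\<Union>i. dlt i ` Bs i)"
proof -
  let ?S = "{i. g i \<noteq> 0}"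
  have fin: "finite ?S" using g by (simp add: Iset_def)
  have "g = (\<Sum>i\<in>?S. dlt i (g i))"
  proof (rule ext)
    fix j
    have "(\<Sum>i\<in>?S. dlt i (g i)) j = (\<Sum>i\<in>?S. if j = i then g i else 0)"
      by (simp add: fun_sum_apply dlt_def)
    also have "\<dots> = (if j \<in> ?S then g j else 0)" using fin by (simp add: sum.delta)
    also have "\<dots> = g j" by simp
    finally show "g j = (\<Sum>i\<in>?S. dlt i (g i)) j" by simp
  qed
  also have "\<dots> \<in> F.span (\<Union>i. dlt i ` Bs i)"
  proof (rule F.span_sum)
    fix i assume "i \<in> ?S"
    have "dlt i (g i) \<in> F.span (dlt i ` Bs i)" using dlt_span[OF LB] g by (simp add: Iset_def)
    also have "\<dots> \<subseteq> F.span (\<Union>i. dlt i ` Bs i)" by (rule F.span_mono) blast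
    finally show "dlt i (g i) \<in> F.span (\<Union>i. dlt i ` Bs i)" .
  qed
  finally show ?thesis .
qed

lemma xv_Iset:
  assumes LB: "\<forall>i. lin_basis scale (W i) (Bs i)" and e: "e \<in> W i0" and b: "b \<in> W i"
  shows "xv i0 e i b \<in> Iset W"
proof -
  have z: "\<And>k. 0 \<in> W k" using Wsub V.subspace_0 by blast
  have "finite {k. xv i0 e i b k \<noteq> 0}" using xv_supp by (rule finite_subset) simp
  moreover have "\<forall>k. xv i0 e i b k \<in> W k"
    using z e b by (auto simp: xv_def dlt_def)
  ultimately show ?thesis unfolding Iset_def by blast
qed

lemma one_Rset: "one \<in> Rset scale W one"
proof -
  have "one = 0 + fscale scale 1 one" by (simp add: fscale_def)
  then show ?thesis unfolding Rset_def using Iset_0 by blast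
qed

lemma Iset_Rset: "g \<in> Iset W \<Longrightarrow> g \<in> Rset scale W one"
proof -
  assume "g \<in> Iset W"
  moreover have "g = g + fscale scale 0 one" by (simp add: fscale_def fun_eq_iff)
  ultimately show ?thesis unfolding Rset_def by blast
qed

lemma BS_span:
  assumes LB: "\<forall>i. lin_basis scale (W i) (Bs i)" and e: "e \<in> W i0"
  shows "F.span (BS Bs i0 e one) = Rset scale W one"
proof
  have BW: "\<And>i b. b \<in> Bs i \<Longrightarrow> b \<in> W i" using LB unfolding lin_basis_def by blast
  show "F.span (BS Bs i0 e one) \<subseteq> Rset scale W one"
  proof (rule F.span_minimal[OF _ Rset_sub])
    show "BS Bs i0 e one \<subseteq> Rset scale W one"
      unfolding BS_def using one_Rset Iset_Rset xv_Iset[OF LB e] BW by auto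
  qed
next
  have BW: "\<And>i b. b \<in> Bs i \<Longrightarrow> b \<in> W i" using LB unfolding lin_basis_def by blast
  let ?S = "BS Bs i0 e one"
  have d0: "dlt i0 a \<in> F.span ?S" if "a \<in> W i0" for a
  proof -
    have "dlt i0 a \<in> F.span (dlt i0 ` Bs i0)" using dlt_span[OF LB that] .
    also have "\<dots> \<subseteq> F.span ?S"
    proof (rule F.span_mono, rule)
      fix v assume "v \<in> dlt i0 ` Bs i0"
      then obtain b where "b \<in> Bs i0" "v = xv i0 e i0 b" by (auto simp: xv_def)
      then show "v \<in> ?S" unfolding BS_def by blast
    qed
    finally show ?thesis .
  qed
  have d: "dlt i b \<in> F.span ?S" if "b \<in> Bs i" for i b
  proof (cases "i = i0")
    case True then show ?thesis using d0 BW that by simp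
  next
    case False
    have "xv i0 e i b \<in> F.span ?S" using that unfolding BS_def by (intro F.span_base) blast
    then have "xv i0 e i b - dlt i0 e \<in> F.span ?S" using d0[OF e] by (rule F.span_diff)
    then show ?thesis using False by (simp add: xv_def)
  qed
  have I: "g \<in> F.span ?S" if "g \<in> Iset W" for g
  proof -
    have "g \<in> F.span (\<Union>i. dlt i ` Bs i)" using Iset_span[OF LB that] .
    also have "\<dots> \<subseteq> F.span (F.span ?S)" by (rule F.span_mono) (use d in blast)
    finally show ?thesis by (simp add: F.span_span)
  qed
  have o: "one \<in> F.span ?S"
  proof (cases "finite {i. one i \<noteq> 0}")
    case True
    then have "one \<in> Iset W" using one_in unfolding Iset_def by blast
    then show ?thesis using I by blast
  next
    case False
    then show ?thesis unfolding BS_def by (intro F.span_base) simp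
  qed
  show "Rset scale W one \<subseteq> F.span ?S"
  proof
    fix x assume "x \<in> Rset scale W one"
    then obtain g c where "x = g + fscale scale c one" "g \<in> Iset W" unfolding Rset_def by blast
    then show "x \<in> F.span ?S" using I o by (simp add: F.span_add F.span_scale)
  qed
qed


lemma BS_indep:
  assumes LB: "\<forall>i. lin_basis scale (W i) (Bs i)" and e: "e \<in> W i0"
  shows "\<not> F.dependent (BS Bs i0 e one)"
  unfolding F.independent_explicit_module
proof (intro allI impI)
  let ?S = "BS Bs i0 e one"
  fix t u v
  assume t: "finite t" and tS: "t \<subseteq> ?S"
    and sum0: "(\<Sum>v\<in>t. fscale scale (u v) v) = 0" and vt: "v \<in> t"
  have Sc: "\<And>v. v \<in> ?S \<Longrightarrow> (\<exists>i b. b \<in> Bs i \<and> v = xv i0 e i b) \<or> (v = one \<and> infinite {i. one i \<noteq> 0})"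
    unfolding BS_def by (auto split: if_splits)
  have coord: "(\<Sum>v\<in>t. scale (u v) (v j)) = 0" for j
    using fun_cong[OF sum0, of j] by (simp add: fun_sum_apply fscale_def)
  have A: "u one = 0" if inf: "infinite {i. one i \<noteq> 0}" and ot: "one \<in> t"
  proof -
    let ?F = "\<Union>v\<in>t-{one}. {k. v k \<noteq> 0}"
    have "finite ?F"
    proof (intro finite_UN_I)
      show "finite (t - {one})" using t by simp
    next
      fix v assume "v \<in> t - {one}"
      then obtain i b where "v = xv i0 e i b" using Sc tS by blast
      then show "finite {k. v k \<noteq> 0}" using finite_subset[OF xv_supp[of i0 e i b]] by simp
    qed
    then have "infinite ({i. one i \<noteq> 0} - ?F)" using inf by (rule Diff_infinite_finite)
    then have "{i. one i \<noteq> 0} - ?F \<noteq> {}" by (metis finite.emptyI)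
    then obtain j where "j \<in> {i. one i \<noteq> 0} - ?F" by blast
    then have j: "one j \<noteq> 0" "j \<notin> ?F" by auto
    have "0 = (\<Sum>v\<in>t. scale (u v) (v j))" using coord by simp
    also have "\<dots> = scale (u one) (one j) + (\<Sum>v\<in>t-{one}. scale (u v) (v j))"
      using t ot by (simp add: sum.remove)
    also have "(\<Sum>v\<in>t-{one}. scale (u v) (v j)) = 0"
      using j(2) by (intro sum.neutral) auto
    finally show ?thesis using j(1) by simp
  qed
  have K: "u (xv i0 e j b) = 0" if H: "\<forall>v\<in>t. (\<forall>b\<in>Bs j. v \<noteq> xv i0 e j b) \<longrightarrow> scale (u v) (v j) = 0"
    and b: "b \<in> Bs j" "xv i0 e j b \<in> t" for j b
  proof -
    let ?T = "{b \<in> Bs j. xv i0 e j b \<in> t}"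
    have "?T \<subseteq> (\<lambda>v. v j) ` t"
    proof
      fix b assume "b \<in> ?T"
      then have "xv i0 e j b \<in> t" by simp
      then show "b \<in> (\<lambda>v. v j) ` t" by (rule rev_image_eqI) (simp add: xv_self)
    qed
    then have finT: "finite ?T" using t finite_subset by blast
    have inj: "inj_on (xv i0 e j) ?T" proof (rule inj_onI)
      fix x y assume "xv i0 e j x = xv i0 e j y"
      then have "xv i0 e j x j = xv i0 e j y j" by simp
      then show "x = y" by (simp add: xv_self)
    qed
    have "0 = (\<Sum>v\<in>t. scale (u v) (v j))" using coord by simp
    also have "\<dots> = (\<Sum>v\<in>xv i0 e j ` ?T. scale (u v) (v j))"
    proof (rule sum.mono_neutral_left[symmetric])
      show "finite t" by (rule t)
      show "xv i0 e j ` ?T \<subseteq> t" by blast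
      show "\<forall>v\<in>t - xv i0 e j ` ?T. scale (u v) (v j) = 0"
      proof
        fix v assume v: "v \<in> t - xv i0 e j ` ?T"
        then have "\<forall>b\<in>Bs j. v \<noteq> xv i0 e j b" by blast
        then show "scale (u v) (v j) = 0" using H v by blast
      qed
    qed
    also have "\<dots> = (\<Sum>b\<in>?T. scale (u (xv i0 e j b)) b)"
      by (simp add: sum.reindex[OF inj] xv_self)
    finally have "(\<Sum>b\<in>?T. scale (u (xv i0 e j b)) b) = 0" by simp
    moreover have "V.independent (Bs j)" using LB unfolding lin_basis_def by blast
    ultimately show ?thesis using V.independentD[of "Bs j" ?T "\<lambda>b. u (xv i0 e j b)" b] finT b by auto
  qed
  have S1: "u (xv i0 e j b) = 0" if j: "j \<noteq> i0" and b: "b \<in> Bs j" "xv i0 e j b \<in> t" for j b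
  proof (rule K[OF _ b], intro ballI impI)
    fix v assume vt: "v \<in> t" and nv: "\<forall>b\<in>Bs j. v \<noteq> xv i0 e j b"
    from Sc[of v] vt tS have "(\<exists>i b. b \<in> Bs i \<and> v = xv i0 e i b) \<or> (v = one \<and> infinite {i. one i \<noteq> 0})" by blast
    then show "scale (u v) (v j) = 0"
    proof (elim disjE exE conjE)
      fix i b' assume "b' \<in> Bs i" "v = xv i0 e i b'"
      then show ?thesis using nv j xv_other[of j i i0 e b'] by (cases "i = j") auto
    next
      assume "v = one" "infinite {i. one i \<noteq> 0}" then show ?thesis using A vt by simp
    qed
  qed
  have S2: "u (xv i0 e i0 b) = 0" if b: "b \<in> Bs i0" "xv i0 e i0 b \<in> t" for b
  proof (rule K[OF _ b], intro ballI impI)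
    fix v assume vt: "v \<in> t" and nv: "\<forall>b\<in>Bs i0. v \<noteq> xv i0 e i0 b"
    from Sc[of v] vt tS have "(\<exists>i b. b \<in> Bs i \<and> v = xv i0 e i b) \<or> (v = one \<and> infinite {i. one i \<noteq> 0})" by blast
    then show "scale (u v) (v i0) = 0"
    proof (elim disjE exE conjE)
      fix i b' assume "b' \<in> Bs i" "v = xv i0 e i b'"
      then show ?thesis using nv S1[of i b'] vt by (cases "i = i0") auto
    next
      assume "v = one" "infinite {i. one i \<noteq> 0}" then show ?thesis using A vt by simp
    qed
  qed
  from Sc[of v] vt tS have "(\<exists>i b. b \<in> Bs i \<and> v = xv i0 e i b) \<or> (v = one \<and> infinite {i. one i \<noteq> 0})" by blast
    then show "u v = 0"
  proof (elim disjE exE conjE)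
    fix i b' assume "b' \<in> Bs i" "v = xv i0 e i b'"
    then show ?thesis using S1 S2 vt by (cases "i = i0") auto
  next
    assume "v = one" "infinite {i. one i \<noteq> 0}" then show ?thesis using A vt by simp
  qed
qed

lemma BS_basis:
  assumes LB: "\<forall>i. lin_basis scale (W i) (Bs i)" and e: "e \<in> W i0"
  shows "lin_basis (fscale scale) (Rset scale W one) (BS Bs i0 e one)"
  unfolding lin_basis_def using BS_indep[OF LB e] BS_span[OF LB e] F.span_superset by blast


lemma zW[simp]: "0 \<in> W k"
  using Wsub V.subspace_0 by blast

lemma BS_W:
  assumes LB: "\<forall>i. lin_basis scale (W i) (Bs i)" and e: "e \<in> W i0" and v: "v \<in> BS Bs i0 e one"
  shows "v k \<in> W k"
proof -
  have "v \<in> Rset scale W one" using BS_basis[OF LB e] v unfolding lin_basis_def by blast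
  then obtain g c where "v = g + fscale scale c one" "g \<in> Iset W" unfolding Rset_def by blast
  then show ?thesis using Wsub V.subspace_add V.subspace_scale one_in
    unfolding Iset_def fscale_def by fastforce
qed

lemma Pmul_one_l: "(\<And>k. v k \<in> W k) \<Longrightarrow> Pmul mul one v = v"
  by (rule ext) (simp add: Pmul_def mul_one_l)

lemma Pmul_one_r: "(\<And>k. v k \<in> W k) \<Longrightarrow> Pmul mul v one = v"
  by (rule ext) (simp add: Pmul_def mul_one_r)

lemma Pmul_one_one: "Pmul mul one one = one"
  by (rule ext) (simp add: Pmul_def mul_one_l one_in)

lemma Pmul_dlt: "b \<in> W i \<Longrightarrow> b' \<in> W j \<Longrightarrow>
   Pmul mul (dlt i b) (dlt j b') = (if i = j then dlt i (mul i b b') else 0)"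
  by (rule ext) (auto simp: Pmul_def dlt_def mul_0l mul_0r)

lemma xv0: "xv i0 0 i b = dlt i b"
  by (rule ext) (simp add: xv_def dlt_def)

lemma dlt0: "dlt i 0 = 0"
  by (rule ext) (simp add: dlt_def)

lemma part1:
  assumes MB: "\<forall>i. mult_basis scale (W i) (mul i) (Bs i)"
  shows "mult_basis (fscale scale) (Rset scale W one) (Pmul mul) (BS Bs i0 0 one)"
proof -
  have LB: "\<forall>i. lin_basis scale (W i) (Bs i)" using MB unfolding mult_basis_def by blast
  have BW: "\<And>i b. b \<in> Bs i \<Longrightarrow> b \<in> W i" using LB unfolding lin_basis_def by blast
  let ?S = "BS Bs i0 0 one"
  have Sc: "\<And>v. v \<in> ?S \<Longrightarrow> (\<exists>i b. b \<in> Bs i \<and> v = dlt i b) \<or> v = one"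
    unfolding BS_def by (auto split: if_splits simp: xv0)
  have inS: "dlt i b \<in> ?S" if "b \<in> Bs i" for i b
    using that unfolding BS_def by (auto simp: xv0)
  have W: "\<And>v k. v \<in> ?S \<Longrightarrow> v k \<in> W k" using BS_W[OF LB zW] by blast
  have "Pmul mul x y = 0 \<or> Pmul mul x y \<in> ?S" if x: "x \<in> ?S" and y: "y \<in> ?S" for x y
  proof -
    from Sc[OF x] show ?thesis
    proof
      assume "\<exists>i b. b \<in> Bs i \<and> x = dlt i b"
      then obtain i b where b: "b \<in> Bs i" "x = dlt i b" by blast
      from Sc[OF y] show ?thesis
      proof
        assume "\<exists>i b. b \<in> Bs i \<and> y = dlt i b"
        then obtain j b' where b': "b' \<in> Bs j" "y = dlt j b'" by blast
        show ?thesis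
        proof (cases "i = j")
          case True
          have "mul i b b' = 0 \<or> mul i b b' \<in> Bs i" using MB b b' True unfolding mult_basis_def by blast
          then show ?thesis using True b b' BW Pmul_dlt inS dlt0 by auto
        next
          case False then show ?thesis using b b' BW Pmul_dlt by auto
        qed
      next
        assume "y = one" then show ?thesis using Pmul_one_r W x by simp
      qed
    next
      assume "x = one" then show ?thesis using Pmul_one_l W y by simp
    qed
  qed
  then show ?thesis unfolding mult_basis_def using BS_basis[OF LB zW] by blast
qed


lemma Pxv:
  assumes b: "b \<in> W i" and b': "b' \<in> W j" and e: "e \<in> W i0"
  shows "Pmul mul (xv i0 e i b) (xv i0 e j b') =
     (if i = i0 \<and> j = i0 then dlt i0 (mul i0 b b')
      else if j = i0 then dlt i0 (mul i0 e b')
      else if i = i0 then dlt i0 (mul i0 b e)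
      else if i \<noteq> j then dlt i0 (mul i0 e e)
      else dlt i (mul i b b') + dlt i0 (mul i0 e e))"
  using b b' e by (intro ext) (auto simp: Pmul_def xv_def dlt_def mul_0l mul_0r)

lemma part2:
  assumes MB: "\<forall>i. mult_basis scale (W i) (mul i) (Bs i)"
    and SB: "strong_mult_basis scale (W i0) (mul i0) B0"
    and eB: "e \<in> B0" and idem: "mul i0 e e = e"
  shows "strong_mult_basis (fscale scale) (Rset scale W one) (Pmul mul) (BS (Bs(i0 := B0)) i0 e one)"
proof -
  let ?Bs = "Bs(i0 := B0)"
  have LB: "\<forall>i. lin_basis scale (W i) (?Bs i)" using MB SB
    unfolding mult_basis_def strong_mult_basis_def by simp
  have BW: "\<And>i b. b \<in> ?Bs i \<Longrightarrow> b \<in> W i" using LB unfolding lin_basis_def by blast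
  have e0: "e \<in> ?Bs i0" using eB by simp
  have e: "e \<in> W i0" using BW[OF e0] .
  let ?S = "BS ?Bs i0 e one"
  have Sc: "\<And>v. v \<in> ?S \<Longrightarrow> (\<exists>i b. b \<in> ?Bs i \<and> v = xv i0 e i b) \<or> v = one"
    unfolding BS_def by (auto split: if_splits)
  have inS: "xv i0 e i b \<in> ?S" if "b \<in> ?Bs i" for i b
    using that unfolding BS_def by blast
  have in0: "dlt i0 b \<in> ?S" if "b \<in> B0" for b
    using inS[of b i0] that by (simp add: xv_def)
  have B0m: "mul i0 b b' \<in> B0" if "b \<in> B0" "b' \<in> B0" for b b'
    using SB that unfolding strong_mult_basis_def by blast
  have W: "\<And>v k. v \<in> ?S \<Longrightarrow> v k \<in> W k" using BS_W[OF LB e] by blast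
  have "Pmul mul x y \<in> ?S" if x: "x \<in> ?S" and y: "y \<in> ?S" for x y
  proof -
    from Sc[OF x] show ?thesis
    proof
      assume "\<exists>i b. b \<in> ?Bs i \<and> x = xv i0 e i b"
      then obtain i b where b: "b \<in> ?Bs i" "x = xv i0 e i b" by blast
      from Sc[OF y] show ?thesis
      proof
        assume "\<exists>i b. b \<in> ?Bs i \<and> y = xv i0 e i b"
        then obtain j b' where b': "b' \<in> ?Bs j" "y = xv i0 e j b'" by blast
        have P: "Pmul mul x y = 
     (if i = i0 \<and> j = i0 then dlt i0 (mul i0 b b')
      else if j = i0 then dlt i0 (mul i0 e b')
      else if i = i0 then dlt i0 (mul i0 b e)
      else if i \<noteq> j then dlt i0 (mul i0 e e)
      else dlt i (mul i b b') + dlt i0 (mul i0 e e))"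
          using Pxv[OF BW[OF b(1)] BW[OF b'(1)] e] b b' by simp
        show ?thesis
        proof (cases "i = i0 \<and> j = i0")
          case True then show ?thesis using P b b' B0m in0 by auto
        next
          case F1: False
          show ?thesis
          proof (cases "j = i0")
            case True then show ?thesis using P F1 b b' B0m in0 eB by auto
          next
            case F2: False
            show ?thesis
            proof (cases "i = i0")
              case True then show ?thesis using P F1 F2 b b' B0m in0 eB by auto
            next
              case F3: False
              show ?thesis
              proof (cases "i = j")
                case False then show ?thesis using P F2 F3 in0 eB idem by auto
              next
                case True
                have "mul i b b' = 0 \<or> mul i b b' \<in> Bs i" using MB b b' True F3 unfolding mult_basis_def by auto
                moreover have "dlt i (mul i b b') + dlt i0 e = xv i0 e i (mul i b b')"
                  using F3 by (simp add: xv_def)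
                moreover have "Pmul mul x y = dlt i (mul i b b') + dlt i0 e"
                  using P F2 F3 True idem by simp
                ultimately show ?thesis
                proof (elim disjE)
                  assume "mul i b b' = 0"
                  then have "Pmul mul x y = dlt i0 e"
                    using \<open>Pmul mul x y = dlt i (mul i b b') + dlt i0 e\<close> by (simp add: dlt0)
                  then show ?thesis using in0 eB by simp
                next
                  assume m: "mul i b b' \<in> Bs i"
                  then have "mul i b b' \<in> ?Bs i" using F3 by simp
                  then show ?thesis using inS[of "mul i b b'" i]
                    \<open>Pmul mul x y = dlt i (mul i b b') + dlt i0 e\<close>
                    \<open>dlt i (mul i b b') + dlt i0 e = xv i0 e i (mul i b b')\<close> by simp
                qed
              qed
            qed
          qed
        qed
      next
        assume "y = one" then show ?thesis using Pmul_one_r W x by simp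
      qed
    next
      assume "x = one" then show ?thesis using Pmul_one_l W y by simp
    qed
  qed
  then show ?thesis unfolding strong_mult_basis_def using BS_basis[OF LB e] by blast
qed

end

theorem lemma5p8:
  fixes scale :: "'k::field \<Rightarrow> 'a::ab_group_add \<Rightarrow> 'a"
    and W :: "'i \<Rightarrow> 'a set"
    and mul :: "'i \<Rightarrow> 'a \<Rightarrow> 'a \<Rightarrow> 'a"
    and one :: "'i \<Rightarrow> 'a"
    and i0 :: 'i
  assumes "vector_space scale"
    and "infinite (UNIV :: 'i set)"
    and "\<forall>i. kalgebra scale (W i) (mul i) (one i)"
    and "\<forall>i. \<exists>B. mult_basis scale (W i) (mul i) B"
  shows "(\<exists>B. mult_basis (fscale scale) (Rset scale W one) (Pmul mul) B) \<and>
         ((\<exists>B. strong_mult_basis scale (W i0) (mul i0) B \<and>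
               (\<exists>e\<in>B. e \<noteq> 0 \<and> mul i0 e e = e))
          \<longrightarrow> (\<exists>B. strong_mult_basis (fscale scale) (Rset scale W one) (Pmul mul) B))"
proof -
  from assms(4) obtain Bs where MB: "\<forall>i. mult_basis scale (W i) (mul i) (Bs i)" by metis
  show ?thesis
  proof (intro conjI impI)
    show "\<exists>B. mult_basis (fscale scale) (Rset scale W one) (Pmul mul) B"
      using part1[OF assms(1) assms(3) MB] by blast
  next
    assume "\<exists>B. strong_mult_basis scale (W i0) (mul i0) B \<and> (\<exists>e\<in>B. e \<noteq> 0 \<and> mul i0 e e = e)"
    then obtain B0 e where "strong_mult_basis scale (W i0) (mul i0) B0" "e \<in> B0" "mul i0 e e = e" by blast
    then show "\<exists>B. strong_mult_basis (fscale scale) (Rset scale W one) (Pmul mul) B"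
      using part2[OF assms(1) assms(3) MB] by blast
  qed
qed

end
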